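(* Let $S_{(1,1)}(x)=\sum_{p\ge1}\binom{2p}{p}x^{2p}$, $C^\bullet_{(1,1)}(x)=\sum_{n\ge1}\varphi(n)S_{(1,1)}(x^n)$ and $0<x<1/2$. Consider the procedure: draw $N\in\mathbb{N}^*$ with $\mathbb{P}(N=n)=\varphi(n)S_{(1,1)}(x^n)/C^\bullet_{(1,1)}(x)$; given $N=n$, draw a nonempty $(1,1)$-balanced word $w$ with probability $x^{n|w|}/S_{(1,1)}(x^n)$; output the necklace of $w^n$. Then each $(1,1)$-balanced necklace $c$ is output with probability $|c|\,x^{|c|}/C^\bullet_{(1,1)}(x)$; consequently, pointing the output at a uniformly random position in $\{1,\dots,|c|\}$ yields a Boltzmann sampler with parameter $x$ for $\Theta Cyc_{(1,1)}$. *)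

theory Defs
  imports "HOL-Analysis.Analysis" "HOL-Number_Theory.Number_Theory"
begin

text \<open>Words over the two-letter alphabet {a,b}, encoded as bool lists (True = a, False = b).\<close>

definition balanced11 :: "bool list \<Rightarrow> bool" where
  "balanced11 w \<longleftrightarrow> w \<noteq> [] \<and> count_list w True = count_list w False"

definition necklace :: "bool list \<Rightarrow> bool list set" where
  "necklace w = {rotate k w | k. True}"

definition bal_necklace :: "bool list set \<Rightarrow> bool" where
  "bal_necklace c \<longleftrightarrow> (\<exists>w. balanced11 w \<and> c = necklace w)"

definition neck_len :: "bool list set \<Rightarrow> nat" where
  "neck_len c = length (SOME w. w \<in> c)"

definition wpow :: "bool list \<Rightarrow> nat \<Rightarrow> bool list" where
  "wpow w n = concat (replicate n w)"

text \<open>S_{(1,1)}(x) = sum_{p>=1} binom(2p,p) x^(2p)  (the p = 0 term equals 1).\<close>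
definition S11 :: "real \<Rightarrow> real" where
  "S11 x = (\<Sum>p. real ((2*p) choose p) * x ^ (2*p)) - 1"

definition C11 :: "real \<Rightarrow> real" where
  "C11 x = (\<Sum>m. real (totient (Suc m)) * S11 (x ^ Suc m))"

definition draw_prob :: "real \<Rightarrow> nat \<Rightarrow> bool list \<Rightarrow> real" where
  "draw_prob x n w =
     (real (totient n) * S11 (x ^ n) / C11 x) * (x ^ (n * length w) / S11 (x ^ n))"

definition draws_to :: "bool list set \<Rightarrow> (nat \<times> bool list) set" where
  "draws_to c = {(n, w). n \<ge> 1 \<and> balanced11 w \<and> necklace (wpow w n) = c}"

definition out_prob :: "real \<Rightarrow> bool list set \<Rightarrow> real" where
  "out_prob x c = infsum (\<lambda>(n, w). draw_prob x n w) (draws_to c)"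

definition ThetaCyc11 :: "real \<Rightarrow> real" where
  "ThetaCyc11 x = infsum (\<lambda>c. real (neck_len c) * x ^ neck_len c) {c. bal_necklace c}"

end

theory Submission
  imports Defs
begin

lemma rotate_mult: "rotate g v = v \<Longrightarrow> rotate (g*m) v = v"
proof (induction m)
  case 0 then show ?case by simp
next
  case (Suc m)
  have "rotate (g * Suc m) v = rotate g (rotate (g*m) v)" by (simp add: rotate_rotate)
  then show ?case using Suc by simp
qed

lemma rot_gcd:
  assumes "length v = L" "0 < L"
  shows "rotate k v = v \<longleftrightarrow> rotate (gcd k L) v = v"
proof
  assume h: "rotate (gcd k L) v = v"
  obtain m where "k = gcd k L * m" by (metis dvd_def gcd_dvd1)
  then show "rotate k v = v" using rotate_mult[OF h, of m] by simp
next
  assume h: "rotate k v = v"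
  show "rotate (gcd k L) v = v"
  proof (cases "k = 0")
    case True then show ?thesis using assms by simp
  next
    case False
    then obtain a b where ab: "k * a = L * b + gcd k L" using bezout_nat by blast
    have "rotate (k*a) v = v" using rotate_mult[OF h] by simp
    moreover have "rotate (k*a) v = rotate (gcd k L) v"
    proof -
      have "rotate (k*a) v = rotate ((k*a) mod L) v" using rotate_conv_mod[of "k*a" v] assms(1) by simp
      also have "(k*a) mod L = (gcd k L) mod L" using ab by simp
      also have "rotate ((gcd k L) mod L) v = rotate (gcd k L) v" using rotate_conv_mod[of "gcd k L" v] assms(1) by simp
      finally show ?thesis .
    qed
    ultimately show ?thesis by simp
  qed
qed

lemma periodic_nth:
  assumes "rotate m v = v" "0 < m" "m \<le> length v" "i < length v"
  shows "v ! i = v ! (i mod m)"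
  using assms(4)
proof (induction i rule: less_induct)
  case (less i)
  show ?case
  proof (cases "i < m")
    case True then show ?thesis by simp
  next
    case False
    have "v ! (i - m) = rotate m v ! (i - m)" using assms by simp
    also have "\<dots> = v ! ((m + (i - m)) mod length v)" using less.prems False by (simp add: nth_rotate)
    also have "\<dots> = v ! i" using False less.prems by simp
    finally have "v ! i = v ! (i - m)" by simp
    also have "\<dots> = v ! ((i - m) mod m)" using less False assms by simp
    also have "(i - m) mod m = i mod m" using False by (simp add: le_mod_geq)
    finally show ?thesis .
  qed
qed

lemma length_wpow[simp]: "length (wpow w n) = n * length w"
  by (simp add: wpow_def length_concat sum_list_replicate)

lemma wpow_nth:
  "i < k * length w \<Longrightarrow> wpow w k ! i = w ! (i mod length w)"
proof (induction k arbitrary: i)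
  case 0 then show ?case by simp
next
  case (Suc k)
  have e: "wpow w (Suc k) = w @ wpow w k" by (simp add: wpow_def)
  show ?case
  proof (cases "i < length w")
    case True then show ?thesis by (simp add: e nth_append)
  next
    case False
    then have "i - length w < k * length w" using Suc.prems by auto
    then show ?thesis using False Suc.IH by (simp add: e nth_append le_mod_geq)
  qed
qed

lemma periodic_wpow:
  assumes "0 < m" "length v = m * k" "rotate m v = v"
  shows "wpow (take m v) k = v"
proof (cases "k = 0")
  case True then show ?thesis using assms by (simp add: wpow_def)
next
  case False
  then have ml: "m \<le> length v" using assms by simp
  show ?thesis
  proof (rule nth_equalityI)
    show "length (wpow (take m v) k) = length v" using assms ml by (simp add: min_def)
    fix i assume "i < length (wpow (take m v) k)"
    then have i: "i < k * m" using ml by (auto simp: min_def split: if_splits)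
    have "wpow (take m v) k ! i = take m v ! (i mod m)"
      using wpow_nth[of i k "take m v"] i ml by (simp add: min_def)
    also have "\<dots> = v ! (i mod m)" using assms(1) by simp
    also have "\<dots> = v ! i" using periodic_nth[OF assms(3) assms(1) ml] i assms(2)
      by (simp add: mult.commute)
    finally show "wpow (take m v) k ! i = v ! i" .
  qed
qed

lemma take_wpow: "1 \<le> n \<Longrightarrow> take (length w) (wpow w n) = w"
  by (cases n) (auto simp: wpow_def)

lemma rotate_wpow: "rotate (length w) (wpow w n) = wpow w n"
proof (cases n)
  case 0 then show ?thesis by (simp add: wpow_def)
next
  case (Suc m)
  have "rotate (length w) (wpow w n) = concat (replicate m w) @ w"
    using Suc by (simp add: wpow_def rotate_append)
  also have "\<dots> = concat (replicate m w @ [w])" by simp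
  also have "\<dots> = wpow w n" using Suc by (simp add: wpow_def replicate_append_same)
  finally show ?thesis .
qed

lemma count_wpow: "count_list (wpow w n) a = n * count_list w a"
  by (induction n) (auto simp: wpow_def)

lemma count_rotate: "count_list (rotate k u) a = count_list u a"
  unfolding rotate_drop_take
  by (metis append_take_drop_id count_list_append add.commute)

lemma necklace_length: "v \<in> necklace u \<Longrightarrow> length v = length u"
  by (auto simp: necklace_def)

lemma self_in_necklace: "u \<in> necklace u"
  unfolding necklace_def by (metis (mono_tags) mem_Collect_eq rotate0 id_apply)

lemma necklace_eq_iff: "necklace v = necklace u \<longleftrightarrow> v \<in> necklace u"
proof
  assume "necklace v = necklace u" then show "v \<in> necklace u" using self_in_necklace by metis
next
  assume "v \<in> necklace u"
  then obtain k where k: "v = rotate k u" by (auto simp: necklace_def)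
  show "necklace v = necklace u"
  proof (cases "u = []")
    case True then show ?thesis using k by simp
  next
    case False
    let ?L = "length u"
    have "rotate i u \<in> necklace v" for i
    proof -
      have kk: "k \<le> ?L * k" using False by (cases "length u") auto
      have e: "i + ?L*k - k + k = i + ?L*k" using kk by linarith
      have "rotate (i + ?L*k - k) v = rotate (i + ?L*k) u"
        using k by (simp only: rotate_rotate e)
      also have "\<dots> = rotate ((i + ?L*k) mod ?L) u" using rotate_conv_mod[of "i + ?L*k" u] by simp
      also have "(i + ?L*k) mod ?L = i mod ?L" by simp
      also have "rotate (i mod ?L) u = rotate i u" using rotate_conv_mod[of i u] by simp
      finally show ?thesis unfolding necklace_def by (metis (mono_tags, lifting) mem_Collect_eq)
    qed
    moreover have "rotate j v \<in> necklace u" for j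
      using k unfolding necklace_def by (auto simp: rotate_rotate)
    ultimately show ?thesis unfolding necklace_def by blast
  qed
qed

lemma necklace_image: "u \<noteq> [] \<Longrightarrow> necklace u = (\<lambda>k. rotate k u) ` {0..<length u}"
proof
  assume u: "u \<noteq> []"
  show "necklace u \<subseteq> (\<lambda>k. rotate k u) ` {0..<length u}"
  proof
    fix v assume "v \<in> necklace u"
    then obtain k where k: "v = rotate k u" by (auto simp: necklace_def)
    have "v = rotate (k mod length u) u" using k rotate_conv_mod[of k u] by simp
    moreover have "k mod length u \<in> {0..<length u}" using u by simp
    ultimately show "v \<in> (\<lambda>k. rotate k u) ` {0..<length u}" by blast
  qed
qed (auto simp: necklace_def)

lemma finite_necklace: "finite (necklace u)"
proof (cases "u = []")
  case True then show ?thesis by (simp add: necklace_def)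
next
  case False then show ?thesis by (simp add: necklace_image)
qed

lemma mod_inj_aux: "j mod (L::nat) = j' mod L \<Longrightarrow> j \<in> {0<..L} \<Longrightarrow> j' \<in> {0<..L} \<Longrightarrow> j = j'"
  by (metis gcd_nat.eq_iff greaterThanAtMost_iff mod_greater_zero_iff_not_dvd mod_if nat_neq_iff verit_comp_simplify1(3))

lemma stab_sum:
  assumes u: "u \<noteq> []"
  shows "(\<Sum>v\<in>necklace u. card {j\<in>{0<..length u}. rotate j v = v}) = length u"
proof -
  let ?L = "length u"
  define F where "F v = {k\<in>{0..<?L}. rotate k u = v}" for v
  have L0: "0 < ?L" using u by simp
  have U: "{0..<?L} = (\<Union>v\<in>necklace u. F v)"
    unfolding F_def necklace_def by auto
  have c0: "card {0..<?L} = ?L" by simp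
  have "?L = card (\<Union>v\<in>necklace u. F v)" using c0 unfolding U by simp
  also have "\<dots> = (\<Sum>v\<in>necklace u. card (F v))"
    by (rule card_UN_disjoint) (auto simp: finite_necklace F_def)
  also have "\<dots> = (\<Sum>v\<in>necklace u. card {j\<in>{0<..?L}. rotate j v = v})"
  proof (rule sum.cong[OF refl])
    fix v assume "v \<in> necklace u"
    then obtain i where i: "i < ?L" "v = rotate i u" using necklace_image[OF u] by auto
    define S where "S = {j\<in>{0<..?L}. rotate j v = v}"
    have inj: "inj_on (\<lambda>j. (i+j) mod ?L) S"
    proof (rule inj_onI)
      fix j j' assume j: "j \<in> S" "j' \<in> S" and e: "(i+j) mod ?L = (i+j') mod ?L"
      from e have "j mod ?L = j' mod ?L" by (simp add: nat_mod_eq_iff)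
      moreover have "j \<in> {0<..?L}" "j' \<in> {0<..?L}" using j by (auto simp: S_def)
      ultimately show "j = j'" by (rule mod_inj_aux)
    qed
    have img: "F v = (\<lambda>j. (i+j) mod ?L) ` S"
    proof
      show "(\<lambda>j. (i+j) mod ?L) ` S \<subseteq> F v"
      proof
        fix k assume "k \<in> (\<lambda>j. (i+j) mod ?L) ` S"
        then obtain j where j: "j \<in> S" "k = (i+j) mod ?L" by auto
        have "rotate k u = rotate (i+j) u" using j(2) rotate_conv_mod[of "i+j" u] by simp
        also have "\<dots> = rotate j v" using i by (simp add: rotate_rotate add.commute)
        also have "\<dots> = v" using j(1) by (simp add: S_def)
        finally show "k \<in> F v" using j(2) L0 by (simp add: F_def)
      qed
    next
      show "F v \<subseteq> (\<lambda>j. (i+j) mod ?L) ` S"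
      proof
        fix k assume k: "k \<in> F v"
        then have kL: "k < ?L" and rk: "rotate k u = v" by (auto simp: F_def)
        show "k \<in> (\<lambda>j. (i+j) mod ?L) ` S"
        proof (cases "i < k")
          case True
          have "rotate (k - i) v = rotate k u" using i True by (simp add: rotate_rotate)
          then have "k - i \<in> S" using True kL rk by (simp add: S_def)
          moreover have "(i + (k - i)) mod ?L = k" using True kL by simp
          ultimately show ?thesis by (metis image_eqI)
        next
          case False
          have e1: "k + ?L - i + i = k + ?L" using False i by simp
          have "rotate (k + ?L - i) v = rotate (k + ?L) u" using i by (simp only: rotate_rotate e1)
          also have "\<dots> = rotate ((k + ?L) mod ?L) u" using rotate_conv_mod[of "k + ?L" u] by simp
          also have "\<dots> = rotate k u" using kL by simp
          finally have "k + ?L - i \<in> S" using False kL rk i by (simp add: S_def)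
          moreover have "(i + (k + ?L - i)) mod ?L = k" using False kL i by simp
          ultimately show ?thesis by (metis image_eqI)
        qed
      qed
    qed
    show "card (F v) = card {j\<in>{0<..?L}. rotate j v = v}"
    proof -
      have "card (F v) = card S" using img card_image[OF inj] by simp
      then show ?thesis by (simp add: S_def)
    qed
  qed
  finally show ?thesis by simp
qed

lemma phi_sum:
  assumes "length v = L" "0 < L"
  shows "(\<Sum>n\<in>{n. n dvd L \<and> rotate (L div n) v = v}. totient n) = card {j\<in>{0<..L}. rotate j v = v}"
proof -
  define P where "P = {n. n dvd L \<and> rotate (L div n) v = v}"
  define G where "G n = {k\<in>{0<..L}. gcd k L = L div n}" for n
  have finP: "finite P" unfolding P_def using assms(2)
    by (metis (no_types, lifting) finite_divisors_nat mem_Collect_eq rev_finite_subset subsetI)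
  have U: "{j\<in>{0<..L}. rotate j v = v} = (\<Union>n\<in>P. G n)"
  proof
    show "{j\<in>{0<..L}. rotate j v = v} \<subseteq> (\<Union>n\<in>P. G n)"
    proof
      fix k assume k: "k \<in> {j\<in>{0<..L}. rotate j v = v}"
      define g where "g = gcd k L"
      have gd: "g dvd L" "0 < g" using assms(2) by (auto simp: g_def)
      have "L div g dvd L" using gd by (metis dvd_def dvd_div_mult_self mult.commute)
      moreover have "L div (L div g) = g" using gd assms(2) by auto
      moreover have "rotate g v = v" using k rot_gcd[OF assms] by (simp add: g_def)
      ultimately have "L div g \<in> P" "k \<in> G (L div g)" using k by (auto simp: P_def G_def g_def)
      then show "k \<in> (\<Union>n\<in>P. G n)" by blast
    qed
  next
    show "(\<Union>n\<in>P. G n) \<subseteq> {j\<in>{0<..L}. rotate j v = v}"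
    proof
      fix k assume "k \<in> (\<Union>n\<in>P. G n)"
      then obtain n where n: "n \<in> P" "k \<in> G n" by blast
      then have "rotate (gcd k L) v = v" by (auto simp: P_def G_def)
      then show "k \<in> {j\<in>{0<..L}. rotate j v = v}" using n rot_gcd[OF assms] by (auto simp: G_def)
    qed
  qed
  have "card (\<Union>n\<in>P. G n) = (\<Sum>n\<in>P. card (G n))"
  proof (rule card_UN_disjoint[OF finP])
    show "\<forall>n\<in>P. finite (G n)" by (auto simp: G_def)
    show "\<forall>n\<in>P. \<forall>n'\<in>P. n \<noteq> n' \<longrightarrow> G n \<inter> G n' = {}"
    proof (intro ballI impI)
      fix n n' assume nn: "n \<in> P" "n' \<in> P" "n \<noteq> n'"
      have "L div n \<noteq> L div n'"
      proof
        assume "L div n = L div n'"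
        then have "L div (L div n) = L div (L div n')" by simp
        moreover have "L div (L div n) = n" "L div (L div n') = n'" using nn assms(2) by (auto simp: P_def)
        ultimately show False using nn by simp
      qed
      then show "G n \<inter> G n' = {}" by (auto simp: G_def)
    qed
  qed
  also have "\<dots> = (\<Sum>n\<in>P. totient n)"
  proof (rule sum.cong[OF refl])
    fix n assume "n \<in> P"
    then have nd: "n dvd L" by (simp add: P_def)
    have "L div n dvd L" using nd by (metis dvd_def dvd_div_mult_self mult.commute)
    then have "card (G n) = totient (L div (L div n))" unfolding G_def
      using card_gcd_eq_totient assms(2) by blast
    also have "L div (L div n) = n" using nd assms(2) by auto
    finally show "card (G n) = totient n" .
  qed
  finally show ?thesis using U by (simp add: P_def)
qed

lemma draws_to_neck:
  assumes "balanced11 u"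
  shows "draws_to (necklace u) = {(n,w). 1 \<le> n \<and> w \<noteq> [] \<and> wpow w n \<in> necklace u}"
proof -
  have "balanced11 w \<and> necklace (wpow w n) = necklace u \<longleftrightarrow> w \<noteq> [] \<and> wpow w n \<in> necklace u"
    if n: "1 \<le> n" for n w
  proof
    assume "w \<noteq> [] \<and> wpow w n \<in> necklace u"
    then obtain k where w: "w \<noteq> []" and k: "wpow w n = rotate k u" by (auto simp: necklace_def)
    have "n * count_list w a = count_list u a" for a
      using count_wpow[of w n a] count_rotate[of k u a] k by simp
    then have "n * count_list w True = n * count_list w False"
      using assms by (simp add: balanced11_def)
    then have "balanced11 w" using w n by (simp add: balanced11_def)
    then show "balanced11 w \<and> necklace (wpow w n) = necklace u"
      using \<open>w \<noteq> [] \<and> wpow w n \<in> necklace u\<close> necklace_eq_iff by blast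
  next
    assume "balanced11 w \<and> necklace (wpow w n) = necklace u"
    then show "w \<noteq> [] \<and> wpow w n \<in> necklace u" using necklace_eq_iff by (auto simp: balanced11_def)
  qed
  then show ?thesis unfolding draws_to_def by auto
qed

lemma neck_len_neck: "neck_len (necklace u) = length u"
proof -
  have "(SOME w. w \<in> necklace u) \<in> necklace u" using self_in_necklace by (rule someI)
  then show ?thesis unfolding neck_len_def by (rule necklace_length)
qed

lemma core:
  assumes bal: "balanced11 u"
  shows "finite (draws_to (necklace u))"
    "\<And>n w. (n, w) \<in> draws_to (necklace u) \<Longrightarrow> n * length w = length u"
    "(\<Sum>(n,w)\<in>draws_to (necklace u). totient n) = length u"
proof -
  let ?L = "length u"
  let ?c = "necklace u"
  have u: "u \<noteq> []" using bal by (simp add: balanced11_def)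
  then have L0: "0 < ?L" by simp
  have D: "draws_to ?c = {(n,w). 1 \<le> n \<and> w \<noteq> [] \<and> wpow w n \<in> ?c}"
    by (rule draws_to_neck[OF bal])
  define P where "P (v::bool list) = {n. n dvd ?L \<and> rotate (?L div n) v = v}" for v
  define Q where "Q = Sigma ?c P"
  define h where "h = (\<lambda>(v::bool list, n::nat). (n, take (?L div n) v))"
  define g where "g = (\<lambda>(n::nat, w::bool list). (wpow w n, n))"
  have finP: "finite (P v)" for v unfolding P_def using L0
    by (metis (no_types, lifting) finite_divisors_nat mem_Collect_eq rev_finite_subset subsetI)
  have finQ: "finite Q" unfolding Q_def using finite_necklace finP by (rule finite_SigmaI)
  have hQ: "h q \<in> draws_to ?c \<and> g (h q) = q" if q: "q \<in> Q" for q
  proof -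
    obtain v n where qv: "q = (v, n)" by fastforce
    have v: "v \<in> ?c" "n dvd ?L" "rotate (?L div n) v = v" using q qv by (auto simp: Q_def P_def)
    have lv: "length v = ?L" using v(1) by (rule necklace_length)
    have n0: "0 < n" using v(2) L0 by (metis dvd_0_left_iff neq0_conv)
    define m where "m = ?L div n"
    have m0: "0 < m" using v(2) L0 n0 by (auto simp: m_def elim!: dvdE intro!: Nat.gr0I)
    have Lm: "length v = m * n" using v(2) lv by (simp add: m_def)
    have wp: "wpow (take m v) n = v" using periodic_wpow[OF m0 Lm] v(3) by (simp add: m_def)
    have tne: "take m v \<noteq> []" using m0 Lm n0 by (cases v) auto
    show ?thesis using wp tne n0 v(1) by (simp add: h_def g_def qv D m_def Suc_le_eq)
  qed
  have gD: "g d \<in> Q \<and> h (g d) = d" if d: "d \<in> draws_to ?c" for d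
  proof -
    obtain n w where dn: "d = (n, w)" by fastforce
    have nw: "1 \<le> n" "w \<noteq> []" "wpow w n \<in> ?c" using d dn D by auto
    have len: "n * length w = ?L" using necklace_length[OF nw(3)] by simp
    have dv: "n dvd ?L" using len by (metis dvd_triv_left)
    have ld: "?L div n = length w" using len nw(1) by (metis nonzero_mult_div_cancel_left not_one_le_zero)
    have "rotate (?L div n) (wpow w n) = wpow w n" using ld rotate_wpow by simp
    then have "g d \<in> Q" using nw dv by (simp add: g_def dn Q_def P_def)
    moreover have "h (g d) = d" using ld take_wpow[OF nw(1)] by (simp add: g_def h_def dn)
    ultimately show ?thesis by simp
  qed
  have bij: "bij_betw h Q (draws_to ?c)"
    by (rule bij_betw_byWitness[where f'=g]) (use hQ gD in auto)
  show "finite (draws_to ?c)" using bij finQ bij_betw_finite by blast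
  show "\<And>n w. (n, w) \<in> draws_to ?c \<Longrightarrow> n * length w = ?L"
  proof -
    fix n w assume a: "(n, w) \<in> draws_to ?c"
    have "wpow w n \<in> ?c" using a D by auto
    from necklace_length[OF this] show "n * length w = ?L" by simp
  qed
  have "(\<Sum>(n,w)\<in>draws_to ?c. totient n) = (\<Sum>q\<in>Q. (\<lambda>(n,w). totient n) (h q))"
    using sum.reindex_bij_betw[OF bij, of "\<lambda>(n,w). totient n"] by simp
  also have "\<dots> = (\<Sum>(v,n)\<in>Q. totient n)"
    by (rule sum.cong[OF refl]) (auto simp: h_def)
  also have "\<dots> = (\<Sum>v\<in>?c. \<Sum>n\<in>P v. totient n)"
    unfolding Q_def using finite_necklace finP by (simp add: sum.Sigma)
  also have "\<dots> = (\<Sum>v\<in>?c. card {j\<in>{0<..?L}. rotate j v = v})"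
  proof (rule sum.cong[OF refl])
    fix v assume "v \<in> ?c"
    then have "length v = ?L" by (rule necklace_length)
    then show "(\<Sum>n\<in>P v. totient n) = card {j\<in>{0<..?L}. rotate j v = v}"
      unfolding P_def using phi_sum L0 by blast
  qed
  also have "\<dots> = ?L" by (rule stab_sum[OF u])
  finally show "(\<Sum>(n,w)\<in>draws_to ?c. totient n) = ?L" .
qed

lemma count_TF: "count_list w True + count_list w False = length w"
  by (induction w) auto

lemma card_words: "card {w::bool list. length w = n \<and> count_list w True = k} = n choose k"
proof (induction n arbitrary: k)
  case 0
  have "{w::bool list. length w = 0 \<and> count_list w True = k} = (if k = 0 then {[]} else {})" by auto
  then show ?case by simp
next
  case (Suc n)
  let ?A = "\<lambda>n k. {w::bool list. length w = n \<and> count_list w True = k}"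
  show ?case
  proof (cases k)
    case 0
    have "?A (Suc n) 0 = Cons False ` ?A n 0"
    proof
      show "?A (Suc n) 0 \<subseteq> Cons False ` ?A n 0"
      proof
        fix w assume "w \<in> ?A (Suc n) 0"
        then obtain b ws where w: "w = b # ws" "length ws = n" "count_list w True = 0"
          by (auto simp: length_Suc_conv)
        then have "b = False" by (cases b) auto
        then show "w \<in> Cons False ` ?A n 0" using w by auto
      qed
    qed auto
    then have "card (?A (Suc n) 0) = card (?A n 0)" by (simp add: card_image)
    then show ?thesis using Suc.IH 0 by simp
  next
    case (Suc j)
    have "?A (Suc n) (Suc j) = Cons True ` ?A n j \<union> Cons False ` ?A n (Suc j)"
    proof
      show "?A (Suc n) (Suc j) \<subseteq> Cons True ` ?A n j \<union> Cons False ` ?A n (Suc j)"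
      proof
        fix w assume "w \<in> ?A (Suc n) (Suc j)"
        then obtain b ws where w: "w = b # ws" "length ws = n" "count_list w True = Suc j"
          by (auto simp: length_Suc_conv)
        then show "w \<in> Cons True ` ?A n j \<union> Cons False ` ?A n (Suc j)" by (cases b) auto
      qed
    qed auto
    moreover have "Cons True ` ?A n j \<inter> Cons False ` ?A n (Suc j) = {}" by auto
    moreover have "finite (?A n j)" "finite (?A n (Suc j))"
      using finite_lists_length_eq[of "UNIV::bool set" n] by (auto intro: rev_finite_subset)
    ultimately have "card (?A (Suc n) (Suc j)) = card (?A n j) + card (?A n (Suc j))"
      by (simp add: card_Un_disjoint card_image)
    then show ?thesis using Suc.IH \<open>k = Suc j\<close> by simp
  qed
qed

lemma has_sum_Sigma_nonneg:
  fixes f :: "'a \<times> 'b \<Rightarrow> real"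
  assumes "\<And>x. x \<in> A \<Longrightarrow> ((\<lambda>y. f (x,y)) has_sum g x) (B x)" "(g has_sum S) A"
    "\<And>x y. x \<in> A \<Longrightarrow> y \<in> B x \<Longrightarrow> f (x,y) \<ge> 0"
  shows "(f has_sum S) (Sigma A B)"
proof -
  have s: "f summable_on Sigma A B"
    by (rule summable_on_SigmaI[where g=g]) (use assms has_sum_imp_summable in auto)
  show ?thesis by (rule has_sum_SigmaI[where g=g]) (use assms s in auto)
qed

definition cb :: "real \<Rightarrow> nat \<Rightarrow> real" where
  "cb y p = real ((2*p) choose p) * y ^ (2*p)"

lemma cb_le: "0 \<le> y \<Longrightarrow> cb y p \<le> (4 * y^2) ^ p"
proof -
  assume y: "0 \<le> y"
  have "real ((2*p) choose p) \<le> 2 ^ (2*p)" using binomial_le_pow2[of "2*p" p]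
    by (metis of_nat_le_iff of_nat_numeral of_nat_power)
  also have "(2::real) ^ (2*p) = 4 ^ p" by (simp add: power_mult)
  finally have "cb y p \<le> 4^p * y^(2*p)" unfolding cb_def using y by (simp add: mult_right_mono)
  also have "\<dots> = (4 * y^2)^p" by (simp add: power_mult power_mult_distrib)
  finally show ?thesis .
qed

lemma cb_nonneg: "0 \<le> y \<Longrightarrow> 0 \<le> cb y p" by (simp add: cb_def)

lemma cb_summable: "0 \<le> y \<Longrightarrow> y < 1/2 \<Longrightarrow> summable (cb y)"
proof -
  assume y: "0 \<le> y" "y < 1/2"
  have "4 * y^2 < 1"
  proof -
    have "y^2 < (1/2)^2" using y by (intro power_strict_mono) auto
    then have "y^2 < 1/4" by (simp add: power2_eq_square)
    then show ?thesis by simp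
  qed
  then have "summable (\<lambda>p. (4*y^2)^p)" using y by (intro summable_geometric) simp
  then show ?thesis
    by (rule summable_comparison_test'[where N=0]) (use y cb_le cb_nonneg in auto)
qed

lemma S11_eq: "S11 y = suminf (cb y) - 1"
  by (simp add: S11_def cb_def[abs_def])

lemma cb_shift_sums: "0 \<le> y \<Longrightarrow> y < 1/2 \<Longrightarrow> (\<lambda>p. cb y (Suc p)) sums S11 y"
proof -
  assume y: "0 \<le> y" "y < 1/2"
  have "cb y sums suminf (cb y)" using cb_summable[OF y] by (rule summable_sums)
  moreover have "cb y 0 = 1" by (simp add: cb_def)
  ultimately show ?thesis unfolding S11_eq using sums_Suc_iff[of "cb y" "suminf (cb y) - 1"] by simp
qed

lemma S11_pos: "0 < y \<Longrightarrow> y < 1/2 \<Longrightarrow> 0 < S11 y"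
proof -
  assume y: "0 < y" "y < 1/2"
  have s: "(\<lambda>p. cb y (Suc p)) sums S11 y" using y by (intro cb_shift_sums) auto
  have pos: "0 < cb y (Suc n)" for n
  proof -
    have a: "0 < real (m choose Suc n)" if "Suc n \<le> m" for m using that by simp
    have b: "0 < real ((2 * Suc n) choose Suc n)" by (rule a) simp
    show ?thesis unfolding cb_def by (rule mult_pos_pos[OF b]) (use y in simp)
  qed
  have "0 < suminf (\<lambda>p. cb y (Suc p))"
    by (rule suminf_pos) (use s pos in \<open>auto simp: sums_iff\<close>)
  then show ?thesis using s by (simp add: sums_iff)
qed

lemma bal_has_sum:
  assumes y: "0 \<le> y" "y < 1/2"
  shows "((\<lambda>w. y ^ length w) has_sum S11 y) {w. balanced11 w}"
proof -
  define W where "W p = {w::bool list. length w = 2*Suc p \<and> count_list w True = Suc p}" for p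
  have finW: "finite (W p)" for p
    using finite_lists_length_eq[of "UNIV::bool set" "2*Suc p"] by (auto simp: W_def intro: rev_finite_subset)
  have fib: "((\<lambda>w. y ^ length w) has_sum cb y (Suc p)) (W p)" for p
  proof (rule has_sum_finiteI[OF finW])
    have "(\<Sum>w\<in>W p. y ^ length w) = (\<Sum>w\<in>W p. y ^ (2*Suc p))"
      by (rule sum.cong) (auto simp: W_def)
    also have "\<dots> = real (card (W p)) * y ^ (2*Suc p)" by simp
    also have "card (W p) = (2*Suc p) choose Suc p" unfolding W_def by (rule card_words)
    finally show "cb y (Suc p) = (\<Sum>w\<in>W p. y ^ length w)" by (simp add: cb_def)
  qed
  have out: "((\<lambda>p. cb y (Suc p)) has_sum S11 y) UNIV"
    by (rule sums_nonneg_imp_has_sum[OF cb_shift_sums[OF y]]) (use y cb_nonneg in auto)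
  have sig: "((\<lambda>(p,w). y ^ length w) has_sum S11 y) (Sigma UNIV W)"
    by (rule has_sum_Sigma_nonneg[OF _ out]) (use fib y in auto)
  have inj: "inj_on snd (Sigma UNIV W)"
    by (rule inj_onI) (auto simp: W_def)
  have img: "snd ` Sigma UNIV W = {w. balanced11 w}"
  proof
    show "snd ` Sigma UNIV W \<subseteq> {w. balanced11 w}"
    proof
      fix w assume "w \<in> snd ` Sigma UNIV W"
      then obtain p where "w \<in> W p" by auto
      then show "w \<in> {w. balanced11 w}" using count_TF[of w] by (auto simp: W_def balanced11_def)
    qed
  next
    show "{w. balanced11 w} \<subseteq> snd ` Sigma UNIV W"
    proof
      fix w assume "w \<in> {w. balanced11 w}"
      then have b: "w \<noteq> []" "count_list w True = count_list w False" by (auto simp: balanced11_def)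
      define k where "k = count_list w True"
      have lw: "length w = 2 * k" using count_TF[of w] b by (simp add: k_def)
      have "k \<noteq> 0"
      proof
        assume "k = 0" then have "length w = 0" using lw by simp
        then show False using b by simp
      qed
      then obtain p where p: "k = Suc p" using not0_implies_Suc by blast
      then have "w \<in> W p" using lw by (simp add: W_def k_def)
      then show "w \<in> snd ` Sigma UNIV W" by force
    qed
  qed
  have e: "((\<lambda>w. y ^ length w) \<circ> snd) = (\<lambda>(p,w). y ^ length w)" by auto
  from sig have h: "(((\<lambda>w. y ^ length w) \<circ> snd) has_sum S11 y) (Sigma UNIV W)" by (simp only: e)
  have "((\<lambda>w. y ^ length w) has_sum S11 y) (snd ` Sigma UNIV W)" using has_sum_reindex[OF inj] h by blast
  then show ?thesis by (simp only: img)
qed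

lemma S11_nonneg: "0 \<le> y \<Longrightarrow> y < 1/2 \<Longrightarrow> 0 \<le> S11 y"
  using cb_shift_sums cb_nonneg sums_le[of "\<lambda>_. 0" "\<lambda>p. cb y (Suc p)" 0 "S11 y"] by auto

lemma S11_bound:
  assumes "0 \<le> y" "y \<le> x" "0 < x" "x < 1/2"
  shows "S11 y \<le> (y/x)^2 * S11 x"
proof -
    have xp: "0 < x" using assms by simp
    have le: "cb y (Suc p) \<le> (y/x)^2 * cb x (Suc p)" for p
    proof -
      have e1: "cb y (Suc p) = real ((2*Suc p) choose Suc p) * y^2 * y^(2*p)"
        unfolding cb_def by (simp add: power_add power2_eq_square)
      have e2: "(y/x)^2 * cb x (Suc p) = real ((2*Suc p) choose Suc p) * y^2 * x^(2*p)"
        unfolding cb_def using xp by (simp add: power_add power2_eq_square field_simps)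
      have "y^(2*p) \<le> x^(2*p)" using assms by (intro power_mono) auto
      then show ?thesis unfolding e1 e2 by (intro mult_left_mono) auto
    qed
    have s1: "(\<lambda>p. cb y (Suc p)) sums S11 y" using assms by (intro cb_shift_sums) auto
    have s2: "(\<lambda>p. (y/x)^2 * cb x (Suc p)) sums ((y/x)^2 * S11 x)"
      using cb_shift_sums[of x] assms by (intro sums_mult) auto
    show ?thesis using sums_le[OF le s1 s2] .
qed

lemma C11_has_sum_nat:
  assumes x: "0 < x" "x < 1/2"
  shows "((\<lambda>m. real (totient (Suc m)) * S11 (x ^ Suc m)) has_sum C11 x) UNIV"
proof -
  define g where "g m = real (totient (Suc m)) * S11 (x ^ Suc m)" for m
  have xle: "x ^ Suc m \<le> x" for m
  proof -
    have "x ^ m \<le> 1" using x by (intro power_le_one) auto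
    then have "x * x ^ m \<le> x * 1" using x by (intro mult_left_mono) auto
    then show "x ^ Suc m \<le> x" by simp
  qed
  have xs: "0 < x ^ Suc m" "x ^ Suc m < 1/2" for m
  proof -
    show "0 < x ^ Suc m" using x by simp
    show "x ^ Suc m < 1/2" using order.strict_trans1[OF xle[of m] x(2)] .
  qed
  have gnn: "0 \<le> g m" for m using S11_nonneg[of "x ^ Suc m"] xs[of m] by (simp add: g_def)
  have gle: "g m \<le> S11 x * (2 * x^2) ^ m" for m
  proof -
    have "S11 (x ^ Suc m) \<le> (x ^ Suc m / x)^2 * S11 x"
      using xs[of m] x xle[of m] by (intro S11_bound) auto
    also have "(x ^ Suc m / x) = x ^ m" using x by simp
    also have "(x^m)^2 = (x^2)^m" by (simp only: power_mult[symmetric] mult.commute)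
    finally have b1: "S11 (x ^ Suc m) \<le> (x^2)^m * S11 x" .
    have "totient (Suc m) \<le> Suc m" by (rule totient_le)
    also have "Suc m \<le> 2 ^ m" by (induction m) auto
    finally have b2: "real (totient (Suc m)) \<le> 2 ^ m" by (metis of_nat_le_iff of_nat_numeral of_nat_power)
    have "g m \<le> 2^m * ((x^2)^m * S11 x)" unfolding g_def
      using b1 b2 S11_nonneg[of "x ^ Suc m"] xs[of m] by (intro mult_mono) auto
    also have "\<dots> = S11 x * (2 * x^2) ^ m" by (simp add: power_mult_distrib)
    finally show ?thesis .
  qed
  have "2 * x^2 < 1"
  proof -
    have "x^2 < (1/2)^2" using x by (intro power_strict_mono) auto
    then have "x^2 < 1/4" by (simp add: power2_eq_square)
    then show ?thesis by simp
  qed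
  then have "summable (\<lambda>m. S11 x * (2 * x^2) ^ m)" by (intro summable_mult summable_geometric) simp
  then have "summable g" by (rule summable_comparison_test'[where N=0]) (use gnn gle in auto)
  then have "g sums C11 x" unfolding C11_def g_def by (rule summable_sums[unfolded g_def])
  then show ?thesis unfolding g_def[symmetric] by (rule sums_nonneg_imp_has_sum) (use gnn in auto)
qed

definition fD :: "real \<Rightarrow> nat \<times> bool list \<Rightarrow> real" where
  "fD x = (\<lambda>(n, w). real (totient n) * x ^ (n * length w))"

lemma D_has_sum:
  assumes x: "0 < x" "x < 1/2"
  shows "(fD x has_sum C11 x) {(n::nat,w). 1 \<le> n \<and> balanced11 w}"
proof -
  define B where "B = {w. balanced11 w}"
  define F where "F = (\<lambda>(m::nat, w::bool list). real (totient (Suc m)) * (x ^ Suc m) ^ length w)"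
  have xle: "x ^ Suc m \<le> x" for m
  proof -
    have "x ^ m \<le> 1" using x by (intro power_le_one) auto
    then have "x * x ^ m \<le> x * 1" using x by (intro mult_left_mono) auto
    then show "x ^ Suc m \<le> x" by simp
  qed
  have fib: "((\<lambda>w. F (m, w)) has_sum (real (totient (Suc m)) * S11 (x ^ Suc m))) B" for m
  proof -
    have "((\<lambda>w. (x ^ Suc m) ^ length w) has_sum S11 (x ^ Suc m)) B"
      unfolding B_def by (rule bal_has_sum) (use x order.strict_trans1[OF xle[of m] x(2)] in auto)
    then show ?thesis unfolding F_def by (simp add: has_sum_cmult_right)
  qed
  have sig: "(F has_sum C11 x) (Sigma UNIV (\<lambda>_. B))"
    by (rule has_sum_Sigma_nonneg[OF _ C11_has_sum_nat[OF x]]) (use fib x in \<open>auto simp: F_def\<close>)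
  define h where "h = (\<lambda>(m::nat, w::bool list). (Suc m, w))"
  have inj: "inj_on h (Sigma UNIV (\<lambda>_. B))" by (rule inj_onI) (auto simp: h_def)
  have img: "h ` Sigma UNIV (\<lambda>_. B) = {(n::nat,w). 1 \<le> n \<and> balanced11 w}"
  proof
    show "h ` Sigma UNIV (\<lambda>_. B) \<subseteq> {(n::nat,w). 1 \<le> n \<and> balanced11 w}" by (auto simp: h_def B_def)
    show "{(n::nat,w). 1 \<le> n \<and> balanced11 w} \<subseteq> h ` Sigma UNIV (\<lambda>_. B)"
    proof
      fix d assume "d \<in> {(n::nat,w). 1 \<le> n \<and> balanced11 w}"
      then obtain n w where d: "d = (n, w)" "1 \<le> n" "balanced11 w" by auto
      then obtain m where "n = Suc m" by (cases n) auto
      then have "d = h (m, w)" "(m, w) \<in> Sigma UNIV (\<lambda>_. B)" using d by (auto simp: h_def B_def)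
      then show "d \<in> h ` Sigma UNIV (\<lambda>_. B)" by blast
    qed
  qed
  have e: "fD x \<circ> h = F" by (auto simp: fD_def h_def F_def power_mult)
  from sig have "((fD x \<circ> h) has_sum C11 x) (Sigma UNIV (\<lambda>_. B))" by (simp only: e)
  then have "(fD x has_sum C11 x) (h ` Sigma UNIV (\<lambda>_. B))" using has_sum_reindex[OF inj] by blast
  then show ?thesis by (simp only: img)
qed

lemma fiber_has_sum:
  assumes "bal_necklace c"
  shows "(fD x has_sum (real (neck_len c) * x ^ neck_len c)) (draws_to c)"
proof -
  obtain u where u: "balanced11 u" "c = necklace u" using assms by (auto simp: bal_necklace_def)
  let ?L = "length u"
  have nl: "neck_len c = ?L" using u neck_len_neck by simp
  have fin: "finite (draws_to c)" using core(1)[OF u(1)] u(2) by simp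
  have "(\<Sum>d\<in>draws_to c. fD x d) = (\<Sum>d\<in>draws_to c. real (totient (fst d)) * x ^ ?L)"
    by (rule sum.cong[OF refl]) (use core(2)[OF u(1)] u(2) in \<open>auto simp: fD_def\<close>)
  also have "\<dots> = real (\<Sum>d\<in>draws_to c. totient (fst d)) * x ^ ?L"
    by (simp add: sum_distrib_right)
  also have "(\<Sum>d\<in>draws_to c. totient (fst d)) = (\<Sum>(n,w)\<in>draws_to c. totient n)"
    by (simp add: case_prod_beta)
  also have "\<dots> = ?L" using core(3)[OF u(1)] u(2) by simp
  finally show ?thesis using fin nl by (intro has_sum_finiteI) auto
qed

lemma Theta_eq_C11:
  assumes x: "0 < x" "x < 1/2"
  shows "((\<lambda>c. real (neck_len c) * x ^ neck_len c) has_sum C11 x) {c. bal_necklace c}"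
proof -
  define Sg where "Sg = Sigma {c. bal_necklace c} draws_to"
  have inj: "inj_on snd Sg" by (rule inj_onI) (auto simp: Sg_def draws_to_def)
  have img: "snd ` Sg = {(n::nat,w). 1 \<le> n \<and> balanced11 w}"
  proof
    show "snd ` Sg \<subseteq> {(n::nat,w). 1 \<le> n \<and> balanced11 w}" by (auto simp: Sg_def draws_to_def)
    show "{(n::nat,w). 1 \<le> n \<and> balanced11 w} \<subseteq> snd ` Sg"
    proof
      fix d assume "d \<in> {(n::nat,w). 1 \<le> n \<and> balanced11 w}"
      then obtain n w where d: "d = (n, w)" "1 \<le> n" "balanced11 w" by auto
      have "balanced11 (wpow w n)"
      proof -
        have "wpow w n \<noteq> []"
        proof
          assume "wpow w n = []"
          then have "length (wpow w n) = 0" by simp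
          then show False using d by (simp add: balanced11_def)
        qed
        then show ?thesis using d by (simp add: balanced11_def count_wpow)
      qed
      then have "(necklace (wpow w n), d) \<in> Sg" using d by (auto simp: Sg_def draws_to_def bal_necklace_def)
      then show "d \<in> snd ` Sg" by force
    qed
  qed
  have "(fD x has_sum C11 x) (snd ` Sg)" using D_has_sum[OF x] img by simp
  then have "((fD x \<circ> snd) has_sum C11 x) Sg" using has_sum_reindex[OF inj] by blast
  then show ?thesis unfolding Sg_def
    by (rule has_sum_SigmaD) (use fiber_has_sum in \<open>auto simp: o_def\<close>)
qed

theorem mainTheorem5:
  fixes x :: real
  assumes "0 < x" and "x < 1/2"
  shows "\<forall>c. bal_necklace c \<longrightarrow>
           ((\<lambda>(n, w). draw_prob x n w) has_sum
              (real (neck_len c) * x ^ neck_len c / C11 x)) (draws_to c)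
         \<and> (\<forall>i \<in> {1..neck_len c}.
              out_prob x c * (1 / real (neck_len c)) = x ^ neck_len c / ThetaCyc11 x)"
proof (intro allI impI)
  fix c assume bc: "bal_necklace c"
  obtain u where u: "balanced11 u" "c = necklace u" using bc by (auto simp: bal_necklace_def)
  have nl: "neck_len c = length u" using u neck_len_neck by simp
  have L0: "0 < neck_len c" using u nl by (simp add: balanced11_def)
  have xs: "0 < x ^ n" "x ^ n < 1/2" if n1: "1 \<le> n" for n
  proof -
    show "0 < x ^ n" using assms by simp
    obtain m where m: "n = Suc m" using n1 by (cases n) auto
    have "x ^ m \<le> 1" using assms by (intro power_le_one) auto
    then have "x * x ^ m \<le> x * 1" using assms by (intro mult_left_mono) auto
    then have "x ^ n \<le> x" using m by simp
    then show "x ^ n < 1/2" using assms by simp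
  qed
  have eq: "(\<lambda>(n, w). draw_prob x n w) d = fD x d / C11 x" if d: "d \<in> draws_to c" for d
  proof -
    obtain n w where dn: "d = (n, w)" by fastforce
    have n1: "1 \<le> n" using d dn by (simp add: draws_to_def)
    have "S11 (x ^ n) \<noteq> 0" using S11_pos[OF xs[OF n1]] by simp
    then show ?thesis by (simp add: dn draw_prob_def fD_def field_simps)
  qed
  have fib: "(fD x has_sum (real (neck_len c) * x ^ neck_len c)) (draws_to c)"
    by (rule fiber_has_sum[OF bc])
  have p1: "((\<lambda>(n, w). draw_prob x n w) has_sum
              (real (neck_len c) * x ^ neck_len c / C11 x)) (draws_to c)"
    using has_sum_divide_const[OF fib, of "C11 x"] has_sum_cong[of "draws_to c" "\<lambda>(n, w). draw_prob x n w" "\<lambda>d. fD x d / C11 x"] eq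
    by simp
  have op: "out_prob x c = real (neck_len c) * x ^ neck_len c / C11 x"
    unfolding out_prob_def using p1 by (rule infsumI)
  have th: "ThetaCyc11 x = C11 x"
    unfolding ThetaCyc11_def using Theta_eq_C11[OF assms] by (rule infsumI)
  show "((\<lambda>(n, w). draw_prob x n w) has_sum
              (real (neck_len c) * x ^ neck_len c / C11 x)) (draws_to c)
         \<and> (\<forall>i \<in> {1..neck_len c}.
              out_prob x c * (1 / real (neck_len c)) = x ^ neck_len c / ThetaCyc11 x)"
    using p1 op th L0 by simp
qed

end
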